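(* Every weakly-reversible chemical reaction network that has a critical siphon is catalytic.
   Context: A chemical reaction network (CRN) consists of positive integers $s$ (species) and $n$ (complexes), a finite directed graph $G$ with vertex set $\{1,\dots,n\}$ and edge set $E(G)$, and an injective labeling of vertex $i$ by a monic monomial $\psi_i=\prod_{j=1}^s x_j^{y_{ij}}$, $y_i=(y_{i1},\dots,y_{is})\in\mathbb{Z}_{\ge0}^s$. $G$ is weakly-reversible iff each connected component is strongly connected. The stoichiometric subspace $S_G\subseteq\mathbb{R}^s$ is the span of $\{y_i-y_j : (i,j)\in E(G)\}$; for $x\in\mathbb{R}^s_{\ge0}$ the invariant polyhedron containing $x$ is $(x+S_G)\cap\mathbb{R}^s_{\ge0}$. A nonempty $Z\subseteq\{1,\dots,s\}$ is a siphon iff for every $(i,j)\in E(G)$, if $x_k\mid\psi_j$ for some $k\in Z$ then $x_l\mid\psi_i$ for some $l\in Z$. A siphon $Z$ is critical iff there is $z\in\mathbb{R}^s_{\ge0}$ with $Z=\{i : z_i=0\}$ such that the invariant polyhedron containing $z$ meets $\mathbb{R}^s_{>0}$. The event-graph $\overline{G}$ has as vertices all monic monomials in $x_1,\dots,x_s$, with an edge $(N\psi_i,N\psi_j)$ for each $(i,j)\in E(G)$ and each monic monomial $N$. A weakly-reversible CRN is catalytic iff there exist monic monomials $M,N$ path-connected in $\overline{G}$ such that $M/\gcd(M,N)$ and $N/\gcd(M,N)$ are not path-connected in $\overline{G}$. *)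

theory Defs
  imports Complex_Main
begin

text \<open>A CRN with species 1..s and complexes 1..n. Complex i is labelled by the
monomial with exponent vector y i (a function nat => nat, supported on 1..s).  Monic monomials in x_1..x_s are represented by
their exponent vectors: functions nat => nat vanishing outside 1..s.\<close>

definition monomials :: "nat \<Rightarrow> (nat \<Rightarrow> nat) set" where
  "monomials s = {a. \<forall>k. k \<notin> {1..s} \<longrightarrow> a k = 0}"

definition is_crn :: "nat \<Rightarrow> nat \<Rightarrow> (nat \<Rightarrow> nat \<Rightarrow> nat) \<Rightarrow> (nat \<times> nat) set \<Rightarrow> bool" where
  "is_crn s n y E \<longleftrightarrow> 0 < s \<and> 0 < n \<and> E \<subseteq> {1..n} \<times> {1..n}
     \<and> (\<forall>i\<in>{1..n}. y i \<in> monomials s) \<and> inj_on y {1..n}"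

text \<open>Weakly reversible: every connected component (w.r.t. the underlying undirected
graph) is strongly connected.\<close>
definition weakly_reversible :: "nat \<Rightarrow> (nat \<times> nat) set \<Rightarrow> bool" where
  "weakly_reversible n E \<longleftrightarrow>
     (\<forall>i\<in>{1..n}. \<forall>j\<in>{1..n}. (i, j) \<in> (E \<union> E\<inverse>)\<^sup>* \<longrightarrow> (i, j) \<in> E\<^sup>*)"

text \<open>Stoichiometric subspace: the real span of {y_i - y_j : (i,j) in E}, E finite,
vectors in R^s represented as functions nat => real (coordinates 1..s).\<close>
definition stoich_subspace :: "nat \<Rightarrow> (nat \<Rightarrow> nat \<Rightarrow> nat) \<Rightarrow> (nat \<times> nat) set \<Rightarrow> (nat \<Rightarrow> real) set" where
  "stoich_subspace s y E = {v. \<exists>c :: nat \<times> nat \<Rightarrow> real.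
      \<forall>k\<in>{1..s}. v k = (\<Sum>e\<in>E. c e * (real (y (fst e) k) - real (y (snd e) k)))}"

definition siphon :: "nat \<Rightarrow> (nat \<Rightarrow> nat \<Rightarrow> nat) \<Rightarrow> (nat \<times> nat) set \<Rightarrow> nat set \<Rightarrow> bool" where
  "siphon s y E Z \<longleftrightarrow> Z \<noteq> {} \<and> Z \<subseteq> {1..s} \<and>
     (\<forall>(i, j)\<in>E. (\<exists>k\<in>Z. 0 < y j k) \<longrightarrow> (\<exists>l\<in>Z. 0 < y i l))"

definition critical_siphon :: "nat \<Rightarrow> (nat \<Rightarrow> nat \<Rightarrow> nat) \<Rightarrow> (nat \<times> nat) set \<Rightarrow> nat set \<Rightarrow> bool" where
  "critical_siphon s y E Z \<longleftrightarrow> siphon s y E Z \<and>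
     (\<exists>z :: nat \<Rightarrow> real. (\<forall>k\<in>{1..s}. 0 \<le> z k) \<and> Z = {k\<in>{1..s}. z k = 0} \<and>
        (\<exists>v\<in>stoich_subspace s y E. \<forall>k\<in>{1..s}. 0 < z k + v k))"

definition event_edges :: "nat \<Rightarrow> (nat \<Rightarrow> nat \<Rightarrow> nat) \<Rightarrow> (nat \<times> nat) set \<Rightarrow> ((nat \<Rightarrow> nat) \<times> (nat \<Rightarrow> nat)) set" where
  "event_edges s y E = {((\<lambda>k. N k + y i k), (\<lambda>k. N k + y j k)) | N i j. N \<in> monomials s \<and> (i, j) \<in> E}"

definition event_connected :: "nat \<Rightarrow> (nat \<Rightarrow> nat \<Rightarrow> nat) \<Rightarrow> (nat \<times> nat) set \<Rightarrow> (nat \<Rightarrow> nat) \<Rightarrow> (nat \<Rightarrow> nat) \<Rightarrow> bool" where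
  "event_connected s y E M N \<longleftrightarrow>
     (M, N) \<in> (event_edges s y E \<union> (event_edges s y E)\<inverse>)\<^sup>*"

definition catalytic :: "nat \<Rightarrow> (nat \<Rightarrow> nat \<Rightarrow> nat) \<Rightarrow> (nat \<times> nat) set \<Rightarrow> bool" where
  "catalytic s y E \<longleftrightarrow> (\<exists>M\<in>monomials s. \<exists>N\<in>monomials s.
      event_connected s y E M N \<and>
      \<not> event_connected s y E (\<lambda>k. M k - min (M k) (N k)) (\<lambda>k. N k - min (M k) (N k)))"

end

theory Submission
  imports Defs
begin

lemma ec_trans: "event_connected s y E a b \<Longrightarrow> event_connected s y E b c \<Longrightarrow> event_connected s y E a c"
  unfolding event_connected_def by (rule rtrancl_trans)

lemma ec_sym: "event_connected s y E a b \<Longrightarrow> event_connected s y E b a"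
  unfolding event_connected_def
  using rtrancl_converseI[of a b "event_edges s y E \<union> (event_edges s y E)\<inverse>"]
  by (simp add: converse_Un Un_commute)

lemma ec_edge: "N \<in> monomials s \<Longrightarrow> (i,j)\<in>E \<Longrightarrow>
   event_connected s y E (\<lambda>k. N k + y i k) (\<lambda>k. N k + y j k)"
  unfolding event_connected_def event_edges_def by (rule r_into_rtrancl) blast

lemma edge_shift:
  assumes "(b,c) \<in> event_edges s y E" "C \<in> monomials s"
  shows "((\<lambda>k. b k + C k), (\<lambda>k. c k + C k)) \<in> event_edges s y E"
proof -
  obtain N i j where h: "N \<in> monomials s" "(i,j)\<in>E" "b = (\<lambda>k. N k + y i k)" "c = (\<lambda>k. N k + y j k)"
    using assms(1) by (auto simp: event_edges_def)
  have m: "(\<lambda>k. N k + C k) \<in> monomials s" using h(1) assms(2) by (simp add: monomials_def)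
  show ?thesis unfolding event_edges_def mem_Collect_eq
    apply (rule exI[of _ "\<lambda>k. N k + C k"], rule exI[of _ i], rule exI[of _ j])
    using h m by (auto simp: ac_simps)
qed

lemma ec_shift:
  assumes "event_connected s y E P Q" "C \<in> monomials s"
  shows "event_connected s y E (\<lambda>k. P k + C k) (\<lambda>k. Q k + C k)"
  using assms(1) unfolding event_connected_def
proof (induction rule: rtrancl_induct)
  case base then show ?case by simp
next
  case (step b c)
  have "((\<lambda>k. b k + C k), (\<lambda>k. c k + C k)) \<in> event_edges s y E \<union> (event_edges s y E)\<inverse>"
    using step.hyps(2) edge_shift[OF _ assms(2)] by auto
  then show ?case using step.IH by (rule rtrancl_into_rtrancl[rotated])
qed

lemma ec_mult:
  assumes "(i,j)\<in>E" "y i \<in> monomials s" "y j \<in> monomials s"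
  shows "event_connected s y E (\<lambda>k. t * y i k) (\<lambda>k. t * y j k)"
proof (induction t)
  case 0 then show ?case by (simp add: event_connected_def)
next
  case (Suc t)
  have m: "(\<lambda>k. t * y i k) \<in> monomials s" using assms(2) by (simp add: monomials_def)
  have 1: "event_connected s y E (\<lambda>k. t*y i k + y i k) (\<lambda>k. t*y i k + y j k)"
    using ec_edge[OF m assms(1)] .
  have 2: "event_connected s y E (\<lambda>k. t*y i k + y j k) (\<lambda>k. t*y j k + y j k)"
    using ec_shift[OF Suc.IH assms(3)] .
  have e1: "(\<lambda>k. Suc t * y i k) = (\<lambda>k. t*y i k + y i k)" by (simp add: add.commute)
  have e2: "(\<lambda>k. Suc t * y j k) = (\<lambda>k. t*y j k + y j k)" by (simp add: add.commute)
  show ?case unfolding e1 e2 using ec_trans[OF 1 2] .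
qed

lemma mono_sum: "(\<forall>e\<in>F. A e \<in> monomials s) \<Longrightarrow> (\<lambda>k. \<Sum>e\<in>F. A e k) \<in> monomials s"
  by (auto simp: monomials_def)

lemma ec_sum:
  assumes "finite F" "\<forall>e\<in>F. event_connected s y E (A e) (B e)"
    "\<forall>e\<in>F. A e \<in> monomials s \<and> B e \<in> monomials s"
  shows "event_connected s y E (\<lambda>k. \<Sum>e\<in>F. A e k) (\<lambda>k. \<Sum>e\<in>F. B e k)"
  using assms
proof (induction F rule: finite_induct)
  case empty then show ?case by (simp add: event_connected_def)
next
  case (insert x F)
  have mA: "(\<lambda>k. \<Sum>e\<in>F. A e k) \<in> monomials s" using insert.prems(2) by (intro mono_sum) blast
  have c1: "event_connected s y E (A x) (B x)" using insert.prems(1) by blast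
  have h1: "event_connected s y E (\<lambda>k. A x k + (\<Sum>e\<in>F. A e k)) (\<lambda>k. B x k + (\<Sum>e\<in>F. A e k))"
    using ec_shift[OF c1 mA] .
  have IH: "event_connected s y E (\<lambda>k. \<Sum>e\<in>F. A e k) (\<lambda>k. \<Sum>e\<in>F. B e k)"
    using insert.IH insert.prems by blast
  have mB: "B x \<in> monomials s" using insert.prems(2) by blast
  have h2: "event_connected s y E (\<lambda>k. (\<Sum>e\<in>F. A e k) + B x k) (\<lambda>k. (\<Sum>e\<in>F. B e k) + B x k)"
    using ec_shift[OF IH mB] .
  have h3: "event_connected s y E (\<lambda>k. B x k + (\<Sum>e\<in>F. A e k)) (\<lambda>k. B x k + (\<Sum>e\<in>F. B e k))"
  proof -
    have q1: "(\<lambda>k. B x k + (\<Sum>e\<in>F. A e k)) = (\<lambda>k. (\<Sum>e\<in>F. A e k) + B x k)"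
      by (rule ext) (rule add.commute)
    have q2: "(\<lambda>k. B x k + (\<Sum>e\<in>F. B e k)) = (\<lambda>k. (\<Sum>e\<in>F. B e k) + B x k)"
      by (rule ext) (rule add.commute)
    show ?thesis unfolding q1 q2 by (rule h2)
  qed
  have e1: "(\<lambda>k. \<Sum>e\<in>insert x F. A e k) = (\<lambda>k. A x k + (\<Sum>e\<in>F. A e k))"
    using insert.hyps by simp
  have e2: "(\<lambda>k. \<Sum>e\<in>insert x F. B e k) = (\<lambda>k. B x k + (\<Sum>e\<in>F. B e k))"
    using insert.hyps by simp
  show ?case unfolding e1 e2 using ec_trans[OF h1 h3] .
qed

lemma hasZ_add: "(\<exists>k\<in>Z. 0 < N k + Y k) \<longleftrightarrow> (\<exists>k\<in>Z. 0 < (N k::nat)) \<or> (\<exists>k\<in>Z. 0 < Y k)"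
  by auto

lemma ec_inv:
  assumes "event_connected s y E P Q"
    and inv: "\<forall>(i,j)\<in>E. ((\<exists>k\<in>Z. 0<y i k) \<longleftrightarrow> (\<exists>k\<in>Z. 0<y j k))"
  shows "(\<exists>k\<in>Z. 0 < P k) \<longleftrightarrow> (\<exists>k\<in>Z. 0 < Q k)"
  using assms(1) unfolding event_connected_def
proof (induction rule: rtrancl_induct)
  case base then show ?case by simp
next
  case (step b c)
  have "(\<exists>k\<in>Z. 0 < b k) \<longleftrightarrow> (\<exists>k\<in>Z. 0 < c k)"
  proof -
    have "\<exists>N i j. (i,j)\<in>E \<and> ((b = (\<lambda>k. N k + y i k) \<and> c = (\<lambda>k. N k + y j k)) \<or>
         (c = (\<lambda>k. N k + y i k) \<and> b = (\<lambda>k. N k + y j k)))"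
      using step.hyps(2) by (auto simp: event_edges_def)
    then obtain N i j where h: "(i,j)\<in>E" "(b = (\<lambda>k. N k + y i k) \<and> c = (\<lambda>k. N k + y j k)) \<or>
         (c = (\<lambda>k. N k + y i k) \<and> b = (\<lambda>k. N k + y j k))" by blast
    have "(\<exists>k\<in>Z. 0<y i k) \<longleftrightarrow> (\<exists>k\<in>Z. 0<y j k)" using inv h(1) by auto
    then show ?thesis using h(2) hasZ_add[of Z N] by auto
  qed
  then show ?case using step.IH by simp
qed

lemma back_prop:
  assumes "(a,b) \<in> E\<^sup>*"
    and sip: "\<forall>(i, j)\<in>E. (\<exists>k\<in>Z. 0 < y j k) \<longrightarrow> (\<exists>l\<in>Z. 0 < y i l)"
  shows "(\<exists>k\<in>Z. 0 < y b k) \<longrightarrow> (\<exists>k\<in>Z. 0 < y a k)"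
  using assms(1)
proof (induction rule: rtrancl_induct)
  case base then show ?case by simp
next
  case (step b c) then show ?case using sip by blast
qed

theorem theorem4p1:
  fixes s n :: nat and y :: "nat \<Rightarrow> nat \<Rightarrow> nat" and E :: "(nat \<times> nat) set"
  assumes "is_crn s n y E"
    and "weakly_reversible n E"
    and "\<exists>Z. critical_siphon s y E Z"
  shows "catalytic s y E"
proof -
  obtain Z where cs: "critical_siphon s y E Z" using assms(3) by blast
  have sip: "\<forall>(i, j)\<in>E. (\<exists>k\<in>Z. 0 < y j k) \<longrightarrow> (\<exists>l\<in>Z. 0 < y i l)"
    and Zne: "Z \<noteq> {}" and Zs: "Z \<subseteq> {1..s}"
    using cs by (auto simp: critical_siphon_def siphon_def)
  obtain z v where zv: "\<forall>k\<in>{1..s}. 0 \<le> z k" "Z = {k\<in>{1..s}. z k = 0}"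
     "v \<in> stoich_subspace s y E" "\<forall>k\<in>{1..s}. 0 < z k + v k"
    using cs unfolding critical_siphon_def by blast
  obtain c where c: "\<forall>k\<in>{1..s}. v k = (\<Sum>e\<in>E. c e * (real (y (fst e) k) - real (y (snd e) k)))"
    using zv(3) unfolding stoich_subspace_def by blast
  have vpos: "\<forall>k\<in>Z. 0 < v k"
  proof
    fix k assume k: "k \<in> Z"
    then have "k \<in> {1..s}" "z k = 0" using zv(2) by auto
    then show "0 < v k" using zv(4) by force
  qed
  have Esub: "E \<subseteq> {1..n} \<times> {1..n}" and ymon: "\<forall>i\<in>{1..n}. y i \<in> monomials s"
    using assms(1) by (auto simp: is_crn_def)
  have finE: "finite E" using Esub finite_subset by blast
  have finZ: "finite Z" using Zs finite_subset by blast
  have ym: "y (fst e) \<in> monomials s \<and> y (snd e) \<in> monomials s" if "e \<in> E" for e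
    using that Esub ymon by auto
  define a where "a e k = real (y (fst e) k) - real (y (snd e) k)" for e k
  define B where "B k = (\<Sum>e\<in>E. \<bar>a e k\<bar>)" for k
  obtain K :: nat where K0: "(\<Sum>k\<in>Z. B k / v k) < real K"
    using reals_Archimedean2 by blast
  have K: "B k < real K * v k" if "k \<in> Z" for k
  proof -
    have "B k / v k \<le> (\<Sum>k\<in>Z. B k / v k)"
      by (rule member_le_sum[OF that _ finZ]) (use vpos in \<open>auto simp: B_def\<close>)
    then have "B k / v k < real K" using K0 by linarith
    then show ?thesis using vpos that by (simp add: divide_less_eq mult.commute)
  qed
  define d where "d e = \<lfloor>real K * c e\<rfloor>" for e
  have key: "0 < (\<Sum>e\<in>E. real_of_int (d e) * a e k)" if "k \<in> Z" for k
  proof -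
    have ks: "k \<in> {1..s}" using that Zs by auto
    have t: "real K * c e * a e k - \<bar>a e k\<bar> \<le> real_of_int (d e) * a e k" for e
    proof -
      define t where "t = real_of_int (d e) - real K * c e"
      have t1: "\<bar>t\<bar> \<le> 1" unfolding t_def d_def
        by (smt (verit) of_int_floor_le real_of_int_floor_gt_diff_one)
      have "\<bar>t * a e k\<bar> \<le> \<bar>a e k\<bar>" using t1
        by (simp add: abs_mult mult_left_le_one_le)
      moreover have "real_of_int (d e) * a e k = real K * c e * a e k + t * a e k"
        unfolding t_def by (simp add: algebra_simps)
      ultimately show ?thesis by linarith
    qed
    have "(\<Sum>e\<in>E. real K * c e * a e k - \<bar>a e k\<bar>) \<le> (\<Sum>e\<in>E. real_of_int (d e) * a e k)"
      by (rule sum_mono) (rule t)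
    moreover have "(\<Sum>e\<in>E. real K * c e * a e k - \<bar>a e k\<bar>) = real K * v k - B k"
      using c ks by (simp add: sum_subtractf sum_distrib_left B_def a_def mult.assoc)
    ultimately show ?thesis using K[OF that] by linarith
  qed
  define A where "A e = (\<lambda>k. nat \<bar>d e\<bar> * (if d e \<ge> 0 then y (snd e) k else y (fst e) k))" for e
  define Bv where "Bv e = (\<lambda>k. nat \<bar>d e\<bar> * (if d e \<ge> 0 then y (fst e) k else y (snd e) k))" for e
  define M where "M = (\<lambda>k. \<Sum>e\<in>E. A e k)"
  define N where "N = (\<lambda>k. \<Sum>e\<in>E. Bv e k)"
  have ABmon: "\<forall>e\<in>E. A e \<in> monomials s \<and> Bv e \<in> monomials s"
    using ym by (auto simp: A_def Bv_def monomials_def)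
  have ABconn: "\<forall>e\<in>E. event_connected s y E (A e) (Bv e)"
  proof
    fix e assume e: "e \<in> E"
    obtain i j where ij: "e = (i,j)" by (cases e)
    have m: "y i \<in> monomials s" "y j \<in> monomials s" using ym[OF e] ij by auto
    have ec: "event_connected s y E (\<lambda>k. nat \<bar>d e\<bar> * y i k) (\<lambda>k. nat \<bar>d e\<bar> * y j k)"
      using ec_mult[OF _ m] e ij by auto
    show "event_connected s y E (A e) (Bv e)"
    proof (cases "d e \<ge> 0")
      case True
      then show ?thesis using ec_sym[OF ec] ij by (simp add: A_def Bv_def)
    next
      case False
      then show ?thesis using ec ij by (simp add: A_def Bv_def)
    qed
  qed
  have MN: "event_connected s y E M N"
    unfolding M_def N_def using ec_sum[OF finE ABconn ABmon] .
  have Mm: "M \<in> monomials s" and Nm: "N \<in> monomials s"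
    unfolding M_def N_def using ABmon by (auto intro!: mono_sum)
  have diff: "M k < N k" if "k \<in> Z" for k
  proof -
    have "real (N k) - real (M k) = (\<Sum>e\<in>E. real (Bv e k) - real (A e k))"
      by (simp add: M_def N_def sum_subtractf)
    also have "\<dots> = (\<Sum>e\<in>E. real_of_int (d e) * a e k)"
    proof (rule sum.cong[OF refl])
      fix e
      have r: "real (nat \<bar>d e\<bar>) = \<bar>real_of_int (d e)\<bar>" by simp
      show "real (Bv e k) - real (A e k) = real_of_int (d e) * a e k"
        by (cases "d e \<ge> 0") (auto simp: A_def Bv_def a_def r algebra_simps)
    qed
    finally show ?thesis using key[OF that] by linarith
  qed
  have inv: "\<forall>(i,j)\<in>E. ((\<exists>k\<in>Z. 0<y i k) \<longleftrightarrow> (\<exists>k\<in>Z. 0<y j k))"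
  proof (intro ballI, clarify)
    fix i j assume ij: "(i,j) \<in> E"
    have ijn: "i \<in> {1..n}" "j \<in> {1..n}" using ij Esub by auto
    have "(j,i) \<in> (E \<union> E\<inverse>)\<^sup>*" using ij by auto
    then have "(j,i) \<in> E\<^sup>*" using assms(2) ijn unfolding weakly_reversible_def by blast
    then have "(\<exists>k\<in>Z. 0 < y i k) \<longrightarrow> (\<exists>k\<in>Z. 0 < y j k)" using back_prop[OF _ sip] by blast
    moreover have "(\<exists>k\<in>Z. 0 < y j k) \<longrightarrow> (\<exists>k\<in>Z. 0 < y i k)" using sip ij by blast
    ultimately show "(\<exists>k\<in>Z. 0<y i k) \<longleftrightarrow> (\<exists>k\<in>Z. 0<y j k)" by blast
  qed
  have notc: "\<not> event_connected s y E (\<lambda>k. M k - min (M k) (N k)) (\<lambda>k. N k - min (M k) (N k))"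
  proof
    assume h: "event_connected s y E (\<lambda>k. M k - min (M k) (N k)) (\<lambda>k. N k - min (M k) (N k))"
    obtain k0 where k0: "k0 \<in> Z" using Zne by blast
    have "\<exists>k\<in>Z. 0 < N k - min (M k) (N k)" using k0 diff[OF k0] by (intro bexI[of _ k0]) auto
    moreover have "\<not> (\<exists>k\<in>Z. 0 < M k - min (M k) (N k))" using diff by fastforce
    ultimately show False using ec_inv[OF h inv] by blast
  qed
  show ?thesis unfolding catalytic_def using Mm Nm MN notc by blast
qed

end
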